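(* Let $n\ge 3$, let $g:[1,\lfloor n/2\rfloor]\to\mathbb{R}$ be strictly decreasing and strictly convex, and let $A$ be a set of $m$ vertices of $C_n$. Then $A$ is a minimizer of $E_g$ (on $C_n$) if and only if $A$ is maximally even.
   Context: The cycle $C_n$ has vertex set $\{0,\dots,n-1\}$ with $i$ adjacent to $i+1\bmod n$, and $\lfloor n/2\rfloor$ is its diameter. For a finite simple connected graph $G$, $d(u,v)$ is the shortest-path distance, and for a set $A$ of vertices, $E_g(A)=\sum_{\{u,v\}\subseteq A,\,u\ne v} g(d(u,v))$ (sum over unordered pairs; $E_g(A)=0$ if $|A|\le1$). $A$ is a minimizer of a function $F$ on subsets of $V(G)$ if $F(A)=\min\{F(B): B\subseteq V(G), |B|=|A|\}$. The clockwise distance $d^*(u,v)$ is the least non-negative integer congruent to $v-u$ mod $n$. For $A=\{a_0<\dots<a_{m-1}\}$, $\mathrm{span}_A(a_i,a_j)$ is the least positive integer congruent to $j-i$ mod $m$, and $\sigma^*_k(A)$ is the multiset $[\,d^*(u,v): u,v\in A, u\neq v, \mathrm{span}_A(u,v)=k\,]$. $A$ is maximally even if for each $1\le k\le m-1$ the set of values of $\sigma^*_k(A)$ is a single integer or two consecutive integers. *)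

theory Defs
  imports Complex_Main "HOL-Number_Theory.Cong"
begin

definition walk :: "('a \<Rightarrow> 'a \<Rightarrow> bool) \<Rightarrow> 'a \<Rightarrow> 'a \<Rightarrow> nat \<Rightarrow> bool" where
  "walk E u v k \<longleftrightarrow> (\<exists>p :: nat \<Rightarrow> 'a. p 0 = u \<and> p k = v \<and> (\<forall>i<k. E (p i) (p (Suc i))))"

definition graph_dist :: "('a \<Rightarrow> 'a \<Rightarrow> bool) \<Rightarrow> 'a \<Rightarrow> 'a \<Rightarrow> nat" where
  "graph_dist E u v = (LEAST k. walk E u v k)"

definition cycle_adj :: "nat \<Rightarrow> nat \<Rightarrow> nat \<Rightarrow> bool" where
  "cycle_adj n i j \<longleftrightarrow> i < n \<and> j < n \<and> (j = (i + 1) mod n \<or> i = (j + 1) mod n)"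

definition cyc_dist :: "nat \<Rightarrow> nat \<Rightarrow> nat \<Rightarrow> nat" where
  "cyc_dist n u v = graph_dist (cycle_adj n) u v"

definition energy :: "nat \<Rightarrow> (nat \<Rightarrow> real) \<Rightarrow> nat set \<Rightarrow> real" where
  "energy n g A = (\<Sum>(u, v) \<in> {(u, v). u \<in> A \<and> v \<in> A \<and> u < v}. g (cyc_dist n u v))"

definition is_minimizer :: "nat \<Rightarrow> (nat \<Rightarrow> real) \<Rightarrow> nat set \<Rightarrow> bool" where
  "is_minimizer n g A \<longleftrightarrow> A \<subseteq> {0..<n} \<and>
     (\<forall>B. B \<subseteq> {0..<n} \<and> card B = card A \<longrightarrow> energy n g A \<le> energy n g B)"

definition cw_dist :: "nat \<Rightarrow> nat \<Rightarrow> nat \<Rightarrow> nat" where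
  "cw_dist n u v = (LEAST d. [int d = int v - int u] (mod int n))"

(* index i of a = a_i in the increasing enumeration of A *)
definition idx :: "nat set \<Rightarrow> nat \<Rightarrow> nat" where
  "idx A a = card {x \<in> A. x < a}"

definition span :: "nat set \<Rightarrow> nat \<Rightarrow> nat \<Rightarrow> nat" where
  "span A u v = (LEAST k. k > 0 \<and> [int k = int (idx A v) - int (idx A u)] (mod int (card A)))"

(* set of values of the multiset sigma*_k(A) *)
definition sigma_vals :: "nat \<Rightarrow> nat set \<Rightarrow> nat \<Rightarrow> nat set" where
  "sigma_vals n A k = {cw_dist n u v | u v. u \<in> A \<and> v \<in> A \<and> u \<noteq> v \<and> span A u v = k}"

definition maximally_even :: "nat \<Rightarrow> nat set \<Rightarrow> bool" where
  "maximally_even n A \<longleftrightarrow>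
     (\<forall>k. 1 \<le> k \<and> k \<le> card A - 1 \<longrightarrow>
        (\<exists>c. sigma_vals n A k = {c} \<or> sigma_vals n A k = {c, c + 1}))"

end

theory Submission
  imports Defs
begin


definition cwf :: "nat \<Rightarrow> nat \<Rightarrow> nat \<Rightarrow> nat" where
  "cwf n u v = (if u \<le> v then v - u else v + n - u)"

definition delta :: "nat \<Rightarrow> nat \<Rightarrow> nat \<Rightarrow> nat" where
  "delta n u v = min (cwf n u v) (cwf n v u)"

lemma cw_dist_eq:
  assumes "u < n" "v < n"
  shows "cw_dist n u v = cwf n u v"
  unfolding cw_dist_def
proof (rule Least_equality)
  show c: "[int (cwf n u v) = int v - int u] (mod int n)"
  proof (cases "u \<le> v")
    case True then show ?thesis by (simp add: cwf_def of_nat_diff)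
  next
    case False
    then have "int (cwf n u v) = (int v - int u) + int n" using assms by (simp add: cwf_def of_nat_diff)
    then show ?thesis by (simp add: cong_def)
  qed
next
  fix d assume d: "[int d = int v - int u] (mod int n)"
  have c: "[int (cwf n u v) = int v - int u] (mod int n)"
  proof (cases "u \<le> v")
    case True then show ?thesis by (simp add: cwf_def of_nat_diff)
  next
    case False
    then have "int (cwf n u v) = (int v - int u) + int n" using assms by (simp add: cwf_def of_nat_diff)
    then show ?thesis by (simp add: cong_def)
  qed
  have lt: "cwf n u v < n" using assms by (auto simp: cwf_def)
  have "int (cwf n u v) = int (cwf n u v) mod int n" using lt by simp
  also have "\<dots> = int d mod int n" using c d by (simp add: cong_def)
  also have "\<dots> \<le> int d" by (simp add: zmod_le_nonneg_dividend)
  finally show "cwf n u v \<le> d" by simp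
qed

lemma mod_suc_lt: "i < n \<Longrightarrow> (Suc i) mod n = (if Suc i < n then Suc i else 0)"
  by (auto simp: not_less) (metis le_antisym Suc_leI mod_self)

lemma adj_cases:
  assumes "cycle_adj n x y"
  shows "x < n \<and> y < n \<and> ((y = x + 1) \<or> (x + 1 = n \<and> y = 0) \<or> (x = y + 1) \<or> (y + 1 = n \<and> x = 0))"
  using assms unfolding cycle_adj_def
  by (auto simp: mod_suc_lt split: if_splits)

lemma delta_step:
  assumes "u < n" "cycle_adj n x y"
  shows "delta n u y \<le> delta n u x + 1"
  using adj_cases[OF assms(2)] assms(1)
  unfolding delta_def cwf_def by (auto split: if_splits)

lemma walk_bound:
  assumes "walk (cycle_adj n) u v k" "u < n"
  shows "delta n u v \<le> k"
  using assms(1)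
proof (induction k arbitrary: v)
  case 0
  then show ?case by (auto simp: walk_def delta_def cwf_def)
next
  case (Suc k)
  then obtain p where p: "p 0 = u" "p (Suc k) = v" "\<forall>i<Suc k. cycle_adj n (p i) (p (Suc i))"
    unfolding walk_def by blast
  have "walk (cycle_adj n) u (p k) k" unfolding walk_def using p by auto
  then have "delta n u (p k) \<le> k" using Suc.IH by blast
  moreover have "cycle_adj n (p k) v" using p by auto
  ultimately show ?case using delta_step[OF assms(2)] by fastforce
qed

lemma walk_fwd:
  assumes "u < n" "v < n"
  shows "walk (cycle_adj n) u v (cwf n u v)"
  unfolding walk_def
proof (intro exI[of _ "\<lambda>i. (u + i) mod n"] conjI allI impI)
  show "(u + 0) mod n = u" using assms by simp
  show "(u + cwf n u v) mod n = v" using assms by (auto simp: cwf_def)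
  fix i
  have "(u + Suc i) mod n = ((u + i) mod n + 1) mod n" by (simp add: mod_Suc_eq)
  then show "cycle_adj n ((u + i) mod n) ((u + Suc i) mod n)"
    using assms unfolding cycle_adj_def by auto
qed

lemma walk_sym:
  assumes "walk (cycle_adj n) v u k"
  shows "walk (cycle_adj n) u v k"
proof -
  obtain p where p: "p 0 = v" "p k = u" "\<forall>i<k. cycle_adj n (p i) (p (Suc i))"
    using assms unfolding walk_def by blast
  show ?thesis unfolding walk_def
  proof (intro exI[of _ "\<lambda>i. p (k - i)"] conjI allI impI)
    show "p (k - 0) = u" using p by simp
    show "p (k - k) = v" using p by simp
    fix i assume i: "i < k"
    have "cycle_adj n (p (k - Suc i)) (p (Suc (k - Suc i)))" using p i by auto
    moreover have "Suc (k - Suc i) = k - i" using i by simp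
    ultimately show "cycle_adj n (p (k - i)) (p (k - Suc i))"
      unfolding cycle_adj_def by auto
  qed
qed

lemma cyc_dist_eq:
  assumes "u < n" "v < n"
  shows "cyc_dist n u v = delta n u v"
  unfolding cyc_dist_def graph_dist_def
proof (rule Least_equality)
  show "walk (cycle_adj n) u v (delta n u v)"
    using walk_fwd[OF assms] walk_sym[OF walk_fwd[OF assms(2,1)]]
    unfolding delta_def by (cases "cwf n u v \<le> cwf n v u") (auto simp: min_def)
  show "\<And>y. walk (cycle_adj n) u v y \<Longrightarrow> delta n u v \<le> y"
    using walk_bound assms by blast
qed



definition enum :: "nat set \<Rightarrow> nat \<Rightarrow> (nat \<Rightarrow> nat) \<Rightarrow> bool" where
  "enum A m a \<longleftrightarrow> (\<forall>i j. i < j \<and> j < m \<longrightarrow> a i < a j) \<and> A = a ` {0..<m}"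

lemma enum_less_iff:
  assumes "enum A m a" "i < m" "j < m"
  shows "a i < a j \<longleftrightarrow> i < j"
  using assms unfolding enum_def by (cases "i < j"; cases "j < i") (auto dest: less_asym)

lemma enum_eq_iff:
  assumes "enum A m a" "i < m" "j < m"
  shows "a i = a j \<longleftrightarrow> i = j"
  using enum_less_iff[OF assms] enum_less_iff[OF assms(1,3,2)] by (cases "i < j"; cases "j < i") auto

lemma enum_inj: "enum A m a \<Longrightarrow> inj_on a {0..<m}"
  unfolding inj_on_def using enum_eq_iff by auto

lemma enum_card: "enum A m a \<Longrightarrow> card A = m"
proof -
  assume e: "enum A m a"
  have "A = a ` {0..<m}" using e unfolding enum_def by simp
  then show ?thesis using card_image[OF enum_inj[OF e]] by simp
qed

lemma enum_exists:
  assumes "finite A"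
  shows "enum A (card A) (\<lambda>i. sorted_list_of_set A ! i)"
proof -
  let ?xs = "sorted_list_of_set A"
  have s: "sorted_wrt (<) ?xs" by (simp add: assms strict_sorted_list_of_set)
  have l: "length ?xs = card A" by (simp add: assms)
  have st: "set ?xs = A" by (simp add: assms)
  show ?thesis unfolding enum_def
  proof (intro conjI allI impI)
    fix i j assume "i < j \<and> j < card A"
    then show "?xs ! i < ?xs ! j" using sorted_wrt_nth_less[OF s, of i j] l by simp
  next
    have "set ?xs = (\<lambda>i. ?xs ! i) ` {0..<length ?xs}" by (auto simp: set_conv_nth)
    then show "A = (\<lambda>i. ?xs ! i) ` {0..<card A}"
      using st l by simp
  qed
qed

lemma idx_enum:
  assumes "enum A m a" "i < m"
  shows "idx A (a i) = i"
proof -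
  have "{x \<in> A. x < a i} = a ` {0..<i}"
  proof
    show "{x \<in> A. x < a i} \<subseteq> a ` {0..<i}"
    proof
      fix x assume "x \<in> {x \<in> A. x < a i}"
      then obtain j where j: "j < m" "x = a j" "a j < a i" using assms(1) unfolding enum_def by auto
      then have "j < i" using enum_less_iff[OF assms(1) j(1) assms(2)] by simp
      then show "x \<in> a ` {0..<i}" using j by auto
    qed
  next
    show "a ` {0..<i} \<subseteq> {x \<in> A. x < a i}"
    proof
      fix x assume "x \<in> a ` {0..<i}"
      then obtain j where j: "j < i" "x = a j" by auto
      have "x \<in> A" using assms j unfolding enum_def by auto
      moreover have "x < a i" using assms j unfolding enum_def by auto
      ultimately show "x \<in> {x \<in> A. x < a i}" by simp
    qed
  qed
  moreover have "inj_on a {0..<i}"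
    using enum_inj[OF assms(1)] assms(2) by (auto intro: inj_on_subset)
  ultimately show ?thesis unfolding idx_def by (simp add: card_image)
qed

lemma span_enum:
  assumes "enum A m a" "i < m" "j < m" "i \<noteq> j"
  shows "span A (a i) (a j) = (if i < j then j - i else j + m - i)"
  unfolding span_def idx_enum[OF assms(1,2)] idx_enum[OF assms(1,3)] enum_card[OF assms(1)]
proof (rule Least_equality)
  show "0 < (if i < j then j - i else j + m - i) \<and>
    [int (if i < j then j - i else j + m - i) = int j - int i] (mod int m)"
  proof (cases "i < j")
    case True then show ?thesis by (simp add: cong_def of_nat_diff)
  next
    case False
    then have e: "int (j + m - i) = int j - int i + int m" using assms(2) by (simp add: of_nat_diff)
    have "[int (j + m - i) = int j - int i] (mod int m)" unfolding e by (simp add: cong_def)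
    then show ?thesis using False assms(2-4) by simp
  qed
next
  fix k assume k: "0 < k \<and> [int k = int j - int i] (mod int m)"
  let ?d = "if i < j then j - i else j + m - i"
  have dm: "?d < m" using assms(2-4) by auto
  have c: "[int ?d = int j - int i] (mod int m)"
  proof (cases "i < j")
    case True then show ?thesis by (simp add: cong_def of_nat_diff)
  next
    case False
    then have e: "int (j + m - i) = int j - int i + int m" using assms(2) by (simp add: of_nat_diff)
    have "[int (j + m - i) = int j - int i] (mod int m)" unfolding e by (simp add: cong_def)
    then show ?thesis using False assms(2-4) by simp
  qed
  show "?d \<le> k"
  proof (cases "k < m")
    case True
    have "int k = int k mod int m" using True by simp
    also have "\<dots> = int ?d mod int m" using k c by (simp add: cong_def)
    also have "\<dots> = int ?d" using dm by simp
    finally show ?thesis by simp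
  next
    case False then show ?thesis using dm by simp
  qed
qed

lemma modm:
  fixes i k m :: nat
  assumes "i < m" "k < m"
  shows "(i + k) mod m = (if i + k < m then i + k else i + k - m)"
proof (cases "i + k < m")
  case False
  note assms
  then have "i + k - m < m" by simp
  then show ?thesis using False by (simp add: le_mod_geq)
qed simp

definition Xs :: "nat \<Rightarrow> nat \<Rightarrow> (nat \<Rightarrow> nat) \<Rightarrow> nat \<Rightarrow> nat \<Rightarrow> nat" where
  "Xs n m a k i = cwf n (a i) (a ((i + k) mod m))"

lemma sigma_enum:
  assumes "enum A m a" "\<forall>i<m. a i < n" "1 \<le> k" "k < m"
  shows "sigma_vals n A k = Xs n m a k ` {0..<m}"
proof
  show "sigma_vals n A k \<subseteq> Xs n m a k ` {0..<m}"
  proof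
    fix x assume "x \<in> sigma_vals n A k"
    then obtain u v where uv: "x = cw_dist n u v" "u \<in> A" "v \<in> A" "u \<noteq> v" "span A u v = k"
      unfolding sigma_vals_def by blast
    obtain i j where ij: "i < m" "j < m" "u = a i" "v = a j"
      using uv(2,3) assms(1) unfolding enum_def by auto
    have "i \<noteq> j" using ij uv(4) by auto
    then have sp: "(if i < j then j - i else j + m - i) = k"
      using span_enum[OF assms(1) ij(1,2)] uv(5) ij by simp
    have "j = (i + k) mod m" using sp ij(1,2) modm[OF ij(1) assms(4)] by (auto split: if_splits)
    then have "x = Xs n m a k i"
      using uv(1) ij assms(2) cw_dist_eq by (simp add: Xs_def)
    then show "x \<in> Xs n m a k ` {0..<m}" using ij by auto
  qed
next
  show "Xs n m a k ` {0..<m} \<subseteq> sigma_vals n A k"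
  proof
    fix x assume "x \<in> Xs n m a k ` {0..<m}"
    then obtain i where i: "i < m" "x = Xs n m a k i" by auto
    define j where "j = (i + k) mod m"
    have jm: "j < m" using i by (simp add: j_def)
    have ji: "j \<noteq> i" using modm[OF i(1) assms(4)] assms(3,4) i(1) by (auto simp: j_def)
    have sp: "span A (a i) (a j) = k"
      using span_enum[OF assms(1) i(1) jm ji[symmetric]] modm[OF i(1) assms(4)] assms(3,4) i(1)
      by (auto simp: j_def)
    have "x = cw_dist n (a i) (a j)" using i jm assms(2) cw_dist_eq by (simp add: Xs_def j_def)
    moreover have "a i \<noteq> a j" using enum_eq_iff[OF assms(1) i(1) jm] ji by simp
    moreover have "a i \<in> A" "a j \<in> A" using assms(1) i jm unfolding enum_def by auto
    ultimately show "x \<in> sigma_vals n A k" unfolding sigma_vals_def using sp by blast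
  qed
qed

lemma Xs_range:
  assumes "enum A m a" "\<forall>i<m. a i < n" "1 \<le> k" "k < m" "i < m"
  shows "1 \<le> Xs n m a k i \<and> Xs n m a k i \<le> n - 1"
proof -
  define j where "j = (i + k) mod m"
  have jm: "j < m" using assms by (simp add: j_def)
  have ji: "j \<noteq> i" using modm[OF assms(5,4)] assms(3,4) assms(5) by (auto simp: j_def)
  have "a i \<noteq> a j" using enum_eq_iff[OF assms(1,5) jm] ji by simp
  then show ?thesis using assms(2,5) jm unfolding Xs_def j_def[symmetric] cwf_def by auto
qed

lemma Xs_int:
  assumes "enum A m a" "\<forall>i<m. a i < n" "1 \<le> k" "k < m" "i < m"
  shows "int (Xs n m a k i) = int (a ((i + k) mod m)) - int (a i) + (if m \<le> i + k then int n else 0)"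
proof -
  define j where "j = (i + k) mod m"
  have jm: "j < m" using assms by (simp add: j_def)
  have jr: "j = (if i + k < m then i + k else i + k - m)" using modm[OF assms(5,4)] by (simp add: j_def)
  have ajn: "a j < n" "a i < n" using assms(2,5) jm by auto
  show ?thesis
  proof (cases "m \<le> i + k")
    case True
    then have "j < i" using jr assms(4) by auto
    then have "a j < a i" using enum_less_iff[OF assms(1) jm assms(5)] by simp
    then show ?thesis using True ajn unfolding Xs_def j_def[symmetric] cwf_def by (simp add: of_nat_diff)
  next
    case False
    then have "i < j" using jr assms(3) by auto
    then have "a i < a j" using enum_less_iff[OF assms(1) assms(5) jm] by simp
    then show ?thesis using False ajn unfolding Xs_def j_def[symmetric] cwf_def by (simp add: of_nat_diff)
  qed
qed

lemma rot_inj: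
  fixes k m :: nat
  assumes "k < m"
  shows "inj_on (\<lambda>i. (i + k) mod m) {0..<m}"
proof (rule inj_onI)
  fix x y assume "x \<in> {0..<m}" "y \<in> {0..<m}" "(x + k) mod m = (y + k) mod m"
  then show "x = y" using modm[of x m k] modm[of y m k] assms by (auto split: if_splits)
qed

lemma rot_bij:
  fixes k m :: nat
  assumes "k < m"
  shows "(\<lambda>i. (i + k) mod m) ` {0..<m} = {0..<m}"
proof -
  have inj: "inj_on (\<lambda>i. (i + k) mod m) {0..<m}"
    by (rule rot_inj[OF assms])
  have "(\<lambda>i. (i + k) mod m) ` {0..<m} \<subseteq> {0..<m}" using assms by auto
  then show ?thesis using endo_inj_surj[OF _ _ inj] by auto
qed

lemma Xs_sum:
  assumes "enum A m a" "\<forall>i<m. a i < n" "1 \<le> k" "k < m"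
  shows "(\<Sum>i\<in>{0..<m}. Xs n m a k i) = k * n"
proof -
  have e1: "int (\<Sum>i\<in>{0..<m}. Xs n m a k i) = (\<Sum>i\<in>{0..<m}. int (a ((i + k) mod m)) - int (a i) + (if m \<le> i + k then int n else 0))"
    unfolding of_nat_sum using Xs_int[OF assms] by (intro sum.cong) auto
  have e2: "(\<Sum>i\<in>{0..<m}. int (a ((i + k) mod m)) - int (a i) + (if m \<le> i + k then int n else 0))
      = (\<Sum>i\<in>{0..<m}. int (a ((i + k) mod m))) - (\<Sum>i\<in>{0..<m}. int (a i))
      + (\<Sum>i\<in>{0..<m}. (if m \<le> i + k then int n else 0))"
    by (simp add: sum.distrib sum_subtractf)
  have e3: "(\<Sum>i\<in>{0..<m}. int (a ((i + k) mod m))) = (\<Sum>i\<in>{0..<m}. int (a i))"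
  proof -
    have inj: "inj_on (\<lambda>i. (i + k) mod m) {0..<m}"
      by (rule rot_inj[OF assms(4)])
    have "(\<Sum>i\<in>{0..<m}. int (a ((i + k) mod m))) = (\<Sum>i\<in>(\<lambda>i. (i + k) mod m) ` {0..<m}. int (a i))"
      by (simp add: sum.reindex[OF inj])
    then show ?thesis using rot_bij[OF assms(4)] by simp
  qed
  have e4: "(\<Sum>i\<in>{0..<m}. (if m \<le> i + k then int n else 0)) = (\<Sum>i\<in>{m-k..<m}. int n)"
  proof -
    have S: "{i \<in> {0..<m}. m \<le> i + k} = {m-k..<m}" using assms(4) by auto
    have "(\<Sum>i\<in>{0..<m}. (if m \<le> i + k then int n else 0)) = (\<Sum>i\<in>{i \<in> {0..<m}. m \<le> i + k}. int n)"
      by (rule sum.inter_filter[symmetric]) simp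
    then show ?thesis unfolding S .
  qed
  have e5: "(\<Sum>i\<in>{m-k..<m}. int n) = int (k * n)" using assms(4) by simp
  have "int (\<Sum>i\<in>{0..<m}. Xs n m a k i) = int (k * n)"
    unfolding e1 e2 e3 e4 e5 by simp
  then show ?thesis by (simp only: of_nat_eq_iff)
qed



definition hh :: "nat \<Rightarrow> (nat \<Rightarrow> real) \<Rightarrow> nat \<Rightarrow> real" where
  "hh n g x = g (min x (n - x))"

lemma g_cyc:
  assumes "u < n" "v < n" "u \<noteq> v"
  shows "g (cyc_dist n u v) = hh n g (cwf n u v)"
proof -
  have "cyc_dist n u v = min (cwf n u v) (n - cwf n u v)"
    using assms unfolding cyc_dist_eq[OF assms(1,2)] delta_def cwf_def by auto
  then show ?thesis unfolding hh_def by simp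
qed

lemma cyc_sym:
  assumes "u < n" "v < n"
  shows "cyc_dist n u v = cyc_dist n v u"
  using assms by (simp add: cyc_dist_eq delta_def min.commute)

lemma energy_enum:
  assumes e: "enum A m a" and an: "\<forall>i<m. a i < n"
  shows "2 * energy n g A = (\<Sum>k\<in>{1..<m}. \<Sum>i\<in>{0..<m}. hh n g (Xs n m a k i))"
proof -
  define P where "P = {(u, v). u \<in> A \<and> v \<in> A \<and> u < v}"
  define D where "D = {(u, v). u \<in> A \<and> v \<in> A \<and> u \<noteq> v}"
  define \<psi> where "\<psi> = (\<lambda>(u, v). g (cyc_dist n u v))"
  have An: "\<And>x. x \<in> A \<Longrightarrow> x < n" using e an unfolding enum_def by auto
  have finA: "finite A" using e unfolding enum_def by auto
  have finP: "finite P"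
    by (rule finite_subset[of _ "A \<times> A"]) (auto simp: P_def finA)
  have DP: "D = P \<union> prod.swap ` P" unfolding D_def P_def by (auto simp: image_iff)
  have disj: "P \<inter> prod.swap ` P = {}" unfolding P_def by auto
  have "sum \<psi> D = sum \<psi> P + sum \<psi> (prod.swap ` P)"
    unfolding DP by (rule sum.union_disjoint) (use finP disj in auto)
  also have "sum \<psi> (prod.swap ` P) = sum (\<psi> \<circ> prod.swap) P"
    by (rule sum.reindex) simp
  also have "sum (\<psi> \<circ> prod.swap) P = sum \<psi> P"
    by (rule sum.cong) (auto simp: P_def \<psi>_def cyc_sym An)
  finally have 1: "sum \<psi> D = 2 * energy n g A"
    unfolding energy_def P_def \<psi>_def by simp
  have 2: "sum \<psi> D = sum (\<lambda>(u, v). hh n g (cwf n u v)) D"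
    by (rule sum.cong) (auto simp: D_def \<psi>_def g_cyc An)
  define F where "F = (\<lambda>(i, k). (a i, a ((i + k) mod m)))"
  have injF: "inj_on F ({0..<m} \<times> {1..<m})"
  proof (rule inj_onI)
    fix x y assume x: "x \<in> {0..<m} \<times> {1..<m}" and y: "y \<in> {0..<m} \<times> {1..<m}" and Fxy: "F x = F y"
    obtain i k where ik: "x = (i, k)" by (cases x)
    obtain i' k' where ik': "y = (i', k')" by (cases y)
    have r: "i < m" "k < m" "i' < m" "k' < m" using x y ik ik' by auto
    have "a i = a i'" using Fxy ik ik' by (simp add: F_def)
    then have ii: "i = i'" using enum_eq_iff[OF e r(1,3)] by simp
    have "a ((i + k) mod m) = a ((i + k') mod m)" using Fxy ik ik' ii by (simp add: F_def)
    then have "(i + k) mod m = (i + k') mod m" using enum_eq_iff[OF e] r by simp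
    then have "k = k'" using modm[OF r(1,2)] modm[OF r(1,4)] r by (auto split: if_splits)
    then show "x = y" using ik ik' ii by simp
  qed
  have imF: "D = F ` ({0..<m} \<times> {1..<m})"
  proof
    show "D \<subseteq> F ` ({0..<m} \<times> {1..<m})"
    proof
      fix p assume "p \<in> D"
      then obtain u v where uv: "p = (u, v)" "u \<in> A" "v \<in> A" "u \<noteq> v" unfolding D_def by auto
      obtain i j where ij: "i < m" "j < m" "u = a i" "v = a j"
        using uv(2,3) e unfolding enum_def by auto
      have ne: "i \<noteq> j" using ij uv(4) by auto
      define k where "k = (if i < j then j - i else j + m - i)"
      have k: "1 \<le> k" "k < m" using ne ij by (auto simp: k_def)
      have "(i + k) mod m = j" using modm[OF ij(1) k(2)] ij ne by (auto simp: k_def)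
      then have "F (i, k) = p" using uv ij by (simp add: F_def)
      then show "p \<in> F ` ({0..<m} \<times> {1..<m})" using ij k by force
    qed
  next
    show "F ` ({0..<m} \<times> {1..<m}) \<subseteq> D"
    proof
      fix p assume "p \<in> F ` ({0..<m} \<times> {1..<m})"
      then obtain i k where ik: "i < m" "1 \<le> k" "k < m" "p = F (i, k)" by auto
      define j where "j = (i + k) mod m"
      have jm: "j < m" using ik by (simp add: j_def)
      have ji: "j \<noteq> i" using modm[OF ik(1,3)] ik by (auto simp: j_def)
      have "a i \<noteq> a j" using enum_eq_iff[OF e ik(1) jm] ji by simp
      moreover have "a i \<in> A" "a j \<in> A" using e ik(1) jm unfolding enum_def by auto
      ultimately show "p \<in> D" using ik(4) by (simp add: D_def F_def j_def)
    qed
  qed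
  have 3: "sum (\<lambda>(u, v). hh n g (cwf n u v)) D
      = (\<Sum>(i, k)\<in>{0..<m} \<times> {1..<m}. hh n g (Xs n m a k i))"
    unfolding imF by (subst sum.reindex[OF injF]) (simp add: F_def Xs_def case_prod_beta)
  also have "\<dots> = (\<Sum>i\<in>{0..<m}. \<Sum>k\<in>{1..<m}. hh n g (Xs n m a k i))"
    by (simp add: sum.cartesian_product)
  also have "\<dots> = (\<Sum>k\<in>{1..<m}. \<Sum>i\<in>{0..<m}. hh n g (Xs n m a k i))"
    by (rule sum.swap)
  finally show ?thesis using 1 2 by simp
qed



lemma D_strict:
  fixes h :: "nat \<Rightarrow> real"
  assumes conv: "\<And>y. lo < y \<Longrightarrow> y < hi \<Longrightarrow> 2 * h y < h (y - 1) + h (y + 1)"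
  shows "lo \<le> j \<Longrightarrow> j + d + 2 \<le> hi \<Longrightarrow> h (j + 1) - h j < h (j + d + 2) - h (j + d + 1)"
proof (induction d)
  case 0
  have "2 * h (j + 1) < h (j + 1 - 1) + h (j + 1 + 1)" using conv[of "j+1"] 0 by simp
  then show ?case by simp
next
  case (Suc d)
  then have "h (j + 1) - h j < h (j + d + 2) - h (j + d + 1)" by simp
  moreover have "2 * h (j + d + 2) < h (j + d + 2 - 1) + h (j + d + 2 + 1)"
    using conv[of "j + d + 2"] Suc.prems by simp
  ultimately show ?case by (simp add: algebra_simps)
qed

lemma tangent_up:
  fixes h :: "nat \<Rightarrow> real"
  assumes conv: "\<And>y. lo < y \<Longrightarrow> y < hi \<Longrightarrow> 2 * h y < h (y - 1) + h (y + 1)"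
    and "lo \<le> c"
  shows "c + d \<le> hi \<Longrightarrow> h c + real d * (h (c + 1) - h c) \<le> h (c + d) \<and>
      (2 \<le> d \<longrightarrow> h c + real d * (h (c + 1) - h c) < h (c + d))"
proof (induction d)
  case 0 then show ?case by simp
next
  case (Suc d)
  then have IH: "h c + real d * (h (c + 1) - h c) \<le> h (c + d)" by simp
  show ?case
  proof (cases d)
    case 0 then show ?thesis by simp
  next
    case (Suc d')
    have "h (c + 1) - h c < h (c + d' + 2) - h (c + d' + 1)"
      using D_strict[where lo=lo and hi=hi and j=c and d=d', OF conv] assms(2) Suc.prems Suc by simp
    then have "h (c + 1) - h c < h (c + Suc d) - h (c + d)" using Suc by (simp add: algebra_simps)
    then have "h c + real (Suc d) * (h (c + 1) - h c) < h (c + Suc d)"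
      using IH by (simp add: algebra_simps)
    then show ?thesis by simp
  qed
qed

lemma tangent_down:
  fixes h :: "nat \<Rightarrow> real"
  assumes conv: "\<And>y. lo < y \<Longrightarrow> y < hi \<Longrightarrow> 2 * h y < h (y - 1) + h (y + 1)"
    and "c + 1 \<le> hi"
  shows "lo + d \<le> c \<Longrightarrow> h c - real d * (h (c + 1) - h c) \<le> h (c - d) \<and>
      (1 \<le> d \<longrightarrow> h c - real d * (h (c + 1) - h c) < h (c - d))"
proof (induction d)
  case 0 then show ?case by simp
next
  case (Suc d)
  then have IH: "h c - real d * (h (c + 1) - h c) \<le> h (c - d)" by simp
  define y where "y = c - Suc d"
  have yc: "y + (c - y - 1) + 2 = c + 1" "lo \<le> y" "c - d = y + 1" "y + (c - y - 1) + 1 = c"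
    using Suc.prems by (auto simp: y_def)
  have "h (y + 1) - h y < h (y + (c - y - 1) + 2) - h (y + (c - y - 1) + 1)"
    using D_strict[where lo=lo and hi=hi and j=y and d="c - y - 1", OF conv] yc assms(2) by simp
  then have "h (y + 1) - h y < h (c + 1) - h c" unfolding yc(1) yc(4) .
  then have "h c - real (Suc d) * (h (c + 1) - h c) < h y" using IH yc(3) by (simp add: algebra_simps)
  then show ?case by (simp add: y_def)
qed

lemma tangent:
  fixes h :: "nat \<Rightarrow> real"
  assumes conv: "\<And>y. lo < y \<Longrightarrow> y < hi \<Longrightarrow> 2 * h y < h (y - 1) + h (y + 1)"
    and "lo \<le> c" "c < hi" "lo \<le> y" "y \<le> hi"
  shows "h c + (real y - real c) * (h (c + 1) - h c) \<le> h y \<and>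
     (y \<noteq> c \<and> y \<noteq> c + 1 \<longrightarrow> h c + (real y - real c) * (h (c + 1) - h c) < h y)"
proof (cases "c \<le> y")
  case True
  have "h c + real (y - c) * (h (c + 1) - h c) \<le> h (c + (y - c)) \<and>
      (2 \<le> y - c \<longrightarrow> h c + real (y - c) * (h (c + 1) - h c) < h (c + (y - c)))"
    using tangent_up[where lo=lo and hi=hi and c=c and d="y - c", OF conv assms(2)] True assms by simp
  then show ?thesis using True by (auto simp: of_nat_diff)
next
  case False
  have "h c - real (c - y) * (h (c + 1) - h c) \<le> h (c - (c - y)) \<and>
      (1 \<le> c - y \<longrightarrow> h c - real (c - y) * (h (c + 1) - h c) < h (c - (c - y)))"
    using tangent_down[where lo=lo and hi=hi and c=c and d="c - y", OF conv] False assms by simp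
  moreover have "h c - real (c - y) * (h (c + 1) - h c) = h c + (real y - real c) * (h (c + 1) - h c)"
    using False by (simp add: of_nat_diff algebra_simps)
  ultimately show ?thesis using False by auto
qed



lemma all_eq_of_sum:
  fixes x :: "nat \<Rightarrow> nat"
  assumes "\<forall>i<m. x i \<le> b" "(\<Sum>i\<in>{0..<m}. x i) = m * b"
  shows "\<forall>i<m. x i = b"
proof (rule ccontr)
  assume "\<not> (\<forall>i<m. x i = b)"
  then obtain i where i: "i < m" "x i < b" using assms(1) by (meson le_neq_implies_less)
  have "(\<Sum>i\<in>{0..<m}. x i) < (\<Sum>i\<in>{0..<m}. b)"
    by (rule sum_strict_mono_ex1) (use assms(1) i in auto)
  then show False using assms(2) by simp
qed

lemma convex_sum:
  fixes h :: "nat \<Rightarrow> real" and x :: "nat \<Rightarrow> nat"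
  assumes conv: "\<And>y. lo < y \<Longrightarrow> y < hi \<Longrightarrow> 2 * h y < h (y - 1) + h (y + 1)"
    and m: "0 < m" and rng: "\<forall>i<m. lo \<le> x i \<and> x i \<le> hi"
    and S: "(\<Sum>i\<in>{0..<m}. x i) = S"
  shows "real (m - S mod m) * h (S div m) + real (S mod m) * h (S div m + 1) \<le> (\<Sum>i\<in>{0..<m}. h (x i)) \<and>
    ((\<Sum>i\<in>{0..<m}. h (x i)) = real (m - S mod m) * h (S div m) + real (S mod m) * h (S div m + 1)
      \<longleftrightarrow> (\<forall>i<m. x i = S div m \<or> x i = S div m + 1))"
proof -
  define c where "c = S div m"
  define r where "r = S mod m"
  have Scr: "S = m * c + r" by (simp add: c_def r_def)
  have rm: "r < m" using m by (simp add: r_def)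
  have lo1: "m * lo \<le> S"
  proof -
    have "(\<Sum>i\<in>{0..<m}. lo) \<le> (\<Sum>i\<in>{0..<m}. x i)" by (rule sum_mono) (use rng in auto)
    then show ?thesis using S by simp
  qed
  have hi1: "S \<le> m * hi"
  proof -
    have "(\<Sum>i\<in>{0..<m}. x i) \<le> (\<Sum>i\<in>{0..<m}. hi)" by (rule sum_mono) (use rng in auto)
    then show ?thesis using S by simp
  qed
  have loc: "lo \<le> c"
  proof (rule ccontr)
    assume "\<not> lo \<le> c"
    then have "c + 1 \<le> lo" by simp
    then have "m * (c + 1) \<le> m * lo" by (rule mult_le_mono2)
    then show False using lo1 Scr rm by (simp add: algebra_simps)
  qed
  have chi: "c \<le> hi"
  proof (rule ccontr)
    assume "\<not> c \<le> hi"
    then have "hi + 1 \<le> c" by simp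
    then have "m * (hi + 1) \<le> m * c" by (rule mult_le_mono2)
    moreover have "m * (hi + 1) = m * hi + m" by simp
    ultimately show False using hi1 Scr m by linarith
  qed
  have cd: "S div m = c" and rd: "S mod m = r" by (simp_all add: c_def r_def)
  show ?thesis
  proof (cases "c = hi")
    case True
    then have "S = m * hi" using hi1 Scr by simp
    then have r0: "r = 0" using Scr True rm by simp
    have all: "\<forall>i<m. x i = hi"
      by (rule all_eq_of_sum) (use rng S \<open>S = m * hi\<close> in auto)
    have "(\<Sum>i\<in>{0..<m}. h (x i)) = (\<Sum>i\<in>{0..<m}. h hi)" by (rule sum.cong) (use all in auto)
    then show ?thesis using r0 True all m by (simp add: cd rd)
  next
    case False
    then have chi': "c < hi" using chi by simp
    define L where "L = (\<lambda>y::nat. h c + (real y - real c) * (h (c + 1) - h c))"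
    have tg: "\<And>i. i < m \<Longrightarrow> L (x i) \<le> h (x i) \<and> (x i \<noteq> c \<and> x i \<noteq> c + 1 \<longrightarrow> L (x i) < h (x i))"
      unfolding L_def using tangent[OF conv loc chi'] rng by blast
    have sumL: "(\<Sum>i\<in>{0..<m}. L (x i)) = real (m - r) * h c + real r * h (c + 1)"
    proof -
      have "(\<Sum>i\<in>{0..<m}. L (x i)) = (\<Sum>i\<in>{0..<m}. (h c - real c * (h (c + 1) - h c)) + real (x i) * (h (c + 1) - h c))"
        unfolding L_def by (rule sum.cong) (auto simp: algebra_simps)
      also have "\<dots> = real m * (h c - real c * (h (c + 1) - h c)) + real (\<Sum>i\<in>{0..<m}. x i) * (h (c + 1) - h c)"
        by (simp add: sum.distrib sum_distrib_right)
      also have "\<dots> = real m * (h c - real c * (h (c + 1) - h c)) + (real m * real c + real r) * (h (c + 1) - h c)"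
        using S Scr by simp
      also have "\<dots> = real (m - r) * h c + real r * h (c + 1)"
        using rm by (simp add: of_nat_diff algebra_simps)
      finally show ?thesis .
    qed
    have ge: "(\<Sum>i\<in>{0..<m}. L (x i)) \<le> (\<Sum>i\<in>{0..<m}. h (x i))"
      by (rule sum_mono) (use tg in auto)
    have iff: "(\<Sum>i\<in>{0..<m}. h (x i)) = (\<Sum>i\<in>{0..<m}. L (x i)) \<longleftrightarrow> (\<forall>i<m. x i = c \<or> x i = c + 1)"
    proof
      assume eq: "(\<Sum>i\<in>{0..<m}. h (x i)) = (\<Sum>i\<in>{0..<m}. L (x i))"
      show "\<forall>i<m. x i = c \<or> x i = c + 1"
      proof (rule ccontr)
        assume "\<not> (\<forall>i<m. x i = c \<or> x i = c + 1)"
        then obtain i where i: "i < m" "x i \<noteq> c" "x i \<noteq> c + 1" by blast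
        have "(\<Sum>i\<in>{0..<m}. L (x i)) < (\<Sum>i\<in>{0..<m}. h (x i))"
        proof (rule sum_strict_mono_ex1)
          show "\<forall>j\<in>{0..<m}. L (x j) \<le> h (x j)" using tg by auto
          show "\<exists>j\<in>{0..<m}. L (x j) < h (x j)" using tg[OF i(1)] i by auto
        qed simp
        then show False using eq by simp
      qed
    next
      assume all: "\<forall>i<m. x i = c \<or> x i = c + 1"
      show "(\<Sum>i\<in>{0..<m}. h (x i)) = (\<Sum>i\<in>{0..<m}. L (x i))"
        by (rule sum.cong) (use all in \<open>auto simp: L_def\<close>)
    qed
    show ?thesis using ge iff sumL by (simp add: cd rd)
  qed
qed



lemma hh_conv:
  assumes n3: "n \<ge> 3"
    and dec: "\<forall>k. 1 \<le> k \<and> k + 1 \<le> n div 2 \<longrightarrow> g (k + 1) < g k"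
    and cvx: "\<forall>k. 2 \<le> k \<and> k + 1 \<le> n div 2 \<longrightarrow> 2 * g k < g (k - 1) + g (k + 1)"
    and y: "1 < y" "y < n - 1"
  shows "2 * hh n g y < hh n g (y - 1) + hh n g (y + 1)"
proof -
  define p where "p = n div 2"
  have np: "n = 2 * p \<or> n = 2 * p + 1" unfolding p_def by arith
  consider "y + 1 \<le> p" | "n - p \<le> y - 1" | "p \<le> y" "y \<le> n - p" by linarith
  then show ?thesis
  proof cases
    case 1
    then have "min (y - 1) (n - (y - 1)) = y - 1" "min y (n - y) = y" "min (y + 1) (n - (y + 1)) = y + 1"
      using np by auto
    moreover have "2 * g y < g (y - 1) + g (y + 1)" using cvx 1 y by (auto simp: p_def)
    ultimately show ?thesis unfolding hh_def by simp
  next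
    case 2
    define z where "z = n - y"
    have m1: "min (y - 1) (n - (y - 1)) = z + 1" and m2: "min y (n - y) = z"
      and m3: "min (y + 1) (n - (y + 1)) = z - 1"
      using 2 np y by (auto simp: z_def)
    have "2 * g z < g (z - 1) + g (z + 1)"
    proof -
      have "2 \<le> z" "z + 1 \<le> n div 2" using 2 y np by (auto simp: p_def z_def)
      then show ?thesis using spec[OF cvx, of z] by simp
    qed
    then show ?thesis unfolding hh_def m1 m2 m3 by (simp add: algebra_simps)
  next
    case 3
    have p2: "2 \<le> p" using 3 y np by auto
    have gd: "g p < g (p - 1)" using dec p2 spec[OF dec, of "p - 1"] by (auto simp: p_def)
    show ?thesis
    proof (cases "n = 2 * p")
      case True
      then have yp: "y = p" using 3 by simp
      have "min (y - 1) (n - (y - 1)) = p - 1" "min y (n - y) = p" "min (y + 1) (n - (y + 1)) = p - 1"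
        using yp True p2 by auto
      then show ?thesis unfolding hh_def using gd by simp
    next
      case False
      then have n1: "n = 2 * p + 1" using np by simp
      then have "y = p \<or> y = p + 1" using 3 by auto
      then show ?thesis
      proof
        assume yp: "y = p"
        have "min (y - 1) (n - (y - 1)) = p - 1" "min y (n - y) = p" "min (y + 1) (n - (y + 1)) = p"
          using yp n1 p2 by auto
        then show ?thesis unfolding hh_def using gd by simp
      next
        assume yp: "y = p + 1"
        have "min (y - 1) (n - (y - 1)) = p" "min y (n - y) = p" "min (y + 1) (n - (y + 1)) = p - 1"
          using yp n1 p2 y by auto
        then show ?thesis unfolding hh_def using gd by simp
      qed
    qed
  qed
qed

lemma sum_two:
  fixes x :: "nat \<Rightarrow> nat"
  assumes "0 < m" "\<forall>i<m. x i = c \<or> x i = c + 1" "(\<Sum>i\<in>{0..<m}. x i) = S"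
  shows "\<forall>i<m. x i = S div m \<or> x i = S div m + 1"
proof -
  have lo: "m * c \<le> S"
  proof -
    have "(\<Sum>i\<in>{0..<m}. c) \<le> (\<Sum>i\<in>{0..<m}. x i)" by (rule sum_mono) (use assms(2) in force)
    then show ?thesis using assms(3) by simp
  qed
  have hi: "S \<le> m * (c + 1)"
  proof -
    have "(\<Sum>i\<in>{0..<m}. x i) \<le> (\<Sum>i\<in>{0..<m}. c + 1)" by (rule sum_mono) (use assms(2) in force)
    then show ?thesis using assms(3) by simp
  qed
  show ?thesis
  proof (cases "S = m * (c + 1)")
    case True
    have "\<forall>i<m. x i = c + 1"
      by (rule all_eq_of_sum) (use assms(2,3) True in auto)
    moreover have "S div m = c + 1" using True assms(1) by simp
    ultimately show ?thesis by simp
  next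
    case False
    then have "S < m * Suc c" using hi by simp
    then have "S div m = c" using lo by (intro div_nat_eqI) auto
    then show ?thesis using assms(2) by simp
  qed
qed

lemma ME_iff:
  assumes e: "enum A m a" and an: "\<forall>i<m. a i < n" and m2: "2 \<le> m"
  shows "maximally_even n A \<longleftrightarrow>
    (\<forall>k\<in>{1..<m}. \<forall>i<m. Xs n m a k i = k * n div m \<or> Xs n m a k i = k * n div m + 1)"
proof
  assume me: "maximally_even n A"
  show "\<forall>k\<in>{1..<m}. \<forall>i<m. Xs n m a k i = k * n div m \<or> Xs n m a k i = k * n div m + 1"
  proof (intro ballI allI impI)
    fix k i assume k: "k \<in> {1..<m}" and i: "i < m"
    have "1 \<le> k \<and> k \<le> card A - 1" using k enum_card[OF e] by auto
    then obtain c where c: "sigma_vals n A k = {c} \<or> sigma_vals n A k = {c, c + 1}"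
      using me unfolding maximally_even_def by blast
    have sv: "sigma_vals n A k = Xs n m a k ` {0..<m}" using sigma_enum[OF e an] k by auto
    have two: "\<forall>j<m. Xs n m a k j = c \<or> Xs n m a k j = c + 1"
    proof (intro allI impI)
      fix j assume "j < m"
      then have "Xs n m a k j \<in> sigma_vals n A k" using sv by auto
      then show "Xs n m a k j = c \<or> Xs n m a k j = c + 1" using c by auto
    qed
    have "(\<Sum>j\<in>{0..<m}. Xs n m a k j) = k * n" using Xs_sum[OF e an] k by auto
    from sum_two[OF _ two this] m2 i show "Xs n m a k i = k * n div m \<or> Xs n m a k i = k * n div m + 1"
      by auto
  qed
next
  assume H: "\<forall>k\<in>{1..<m}. \<forall>i<m. Xs n m a k i = k * n div m \<or> Xs n m a k i = k * n div m + 1"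
  show "maximally_even n A" unfolding maximally_even_def
  proof (intro allI impI)
    fix k assume k: "1 \<le> k \<and> k \<le> card A - 1"
    then have k': "1 \<le> k" "k < m" using enum_card[OF e] m2 by auto
    define c where "c = k * n div m"
    define V where "V = sigma_vals n A k"
    have sv: "V = Xs n m a k ` {0..<m}" using sigma_enum[OF e an k'] by (simp add: V_def)
    have sub: "V \<subseteq> {c, c + 1}"
    proof
      fix v assume "v \<in> V"
      then obtain i where i: "i < m" "v = Xs n m a k i" using sv by auto
      have "k \<in> {1..<m}" using k' by simp
      then have "Xs n m a k i = k * n div m \<or> Xs n m a k i = k * n div m + 1" using H i(1) by blast
      then show "v \<in> {c, c + 1}" using i(2) by (auto simp: c_def)
    qed
    have ne: "V \<noteq> {}" using sv m2 by auto
    have "V = {c} \<or> V = {c + 1} \<or> V = {c, c + 1}" using sub ne by blast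
    then show "\<exists>c. sigma_vals n A k = {c} \<or> sigma_vals n A k = {c, c + 1}"
      unfolding V_def by blast
  qed
qed

definition bb :: "nat \<Rightarrow> nat \<Rightarrow> nat \<Rightarrow> nat" where
  "bb n m i = i * n div m"

lemma bb_enum:
  assumes "0 < m" "m \<le> n"
  shows "enum (bb n m ` {0..<m}) m (bb n m) \<and> (\<forall>i<m. bb n m i < n)"
proof (intro conjI allI impI)
  show "enum (bb n m ` {0..<m}) m (bb n m)" unfolding enum_def
  proof (intro conjI allI impI)
    fix i j assume ij: "i < j \<and> j < m"
    have "i * n + m \<le> j * n"
    proof -
      have "(i + 1) * n \<le> j * n" using ij by (intro mult_le_mono1) simp
      then show ?thesis using assms(2) by (simp add: algebra_simps)
    qed
    then have "(i * n + m) div m \<le> j * n div m" by (rule div_le_mono)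
    moreover have "(i * n + m) div m = i * n div m + 1" using assms(1) by simp
    ultimately show "bb n m i < bb n m j" unfolding bb_def by simp
  qed simp
next
  fix i assume i: "i < m"
  have "i * n < n * m" using i assms by simp
  then show "bb n m i < n" unfolding bb_def by (rule less_mult_imp_div_less)
qed

lemma bb_Xs:
  assumes "0 < m" "m \<le> n" "1 \<le> k" "k < m" "i < m"
  shows "Xs n m (bb n m) k i = k * n div m \<or> Xs n m (bb n m) k i = k * n div m + 1"
proof -
  obtain e: "enum (bb n m ` {0..<m}) m (bb n m)" and bn: "\<forall>i<m. bb n m i < n"
    using bb_enum[OF assms(1,2)] by blast
  define j where "j = (i + k) mod m"
  have jm: "j < m" using assms by (simp add: j_def)
  have jr: "j = (if i + k < m then i + k else i + k - m)" using modm[OF assms(5,4)] by (simp add: j_def)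
  have X: "Xs n m (bb n m) k i = (i * n + k * n) div m - i * n div m"
  proof (cases "i + k < m")
    case True
    then have "j = i + k" using jr by simp
    moreover have "bb n m i \<le> bb n m (i + k)"
      using enum_less_iff[OF e assms(5), of "i + k"] True assms(3) by simp
    ultimately show ?thesis unfolding Xs_def j_def[symmetric] cwf_def bb_def
      by (simp add: algebra_simps)
  next
    case False
    then have jj: "j = i + k - m" "j < i" using jr assms(4) by auto
    have lt: "bb n m j < bb n m i" using enum_less_iff[OF e jm assms(5)] jj by simp
    have "i + k = j + m" using jj False by simp
    then have eq2: "i * n + k * n = j * n + m * n" by (metis add_mult_distrib)
    have "(i * n + k * n) div m = bb n m j + n" unfolding eq2 bb_def using assms(1)
      by simp
    then show ?thesis unfolding Xs_def j_def[symmetric] cwf_def using lt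
      by (simp add: bb_def)
  qed
  have d: "(i * n + k * n) div m = i * n div m + k * n div m + (i * n mod m + k * n mod m) div m"
    by (rule div_add1_eq)
  have "i * n mod m < m" "k * n mod m < m" using assms(1) by simp_all
  then have "(i * n mod m + k * n mod m) < 2 * m" by linarith
  then have "(i * n mod m + k * n mod m) div m < 2" by (simp add: less_mult_imp_div_less)
  then show ?thesis using X d by auto
qed



lemma key:
  assumes conv: "\<And>y. 1 < y \<Longrightarrow> y < n - 1 \<Longrightarrow> 2 * hh n g y < hh n g (y - 1) + hh n g (y + 1)"
    and e: "enum C m a" and an: "\<forall>i<m. a i < n" and m2: "2 \<le> m"
  shows "(\<Sum>k\<in>{1..<m}. real (m - k * n mod m) * hh n g (k * n div m) + real (k * n mod m) * hh n g (k * n div m + 1))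
      \<le> 2 * energy n g C \<and>
    (2 * energy n g C = (\<Sum>k\<in>{1..<m}. real (m - k * n mod m) * hh n g (k * n div m) + real (k * n mod m) * hh n g (k * n div m + 1))
      \<longleftrightarrow> (\<forall>k\<in>{1..<m}. \<forall>i<m. Xs n m a k i = k * n div m \<or> Xs n m a k i = k * n div m + 1))"
proof -
  define V where "V = (\<lambda>k. real (m - k * n mod m) * hh n g (k * n div m) + real (k * n mod m) * hh n g (k * n div m + 1))"
  define f where "f = (\<lambda>k. \<Sum>i\<in>{0..<m}. hh n g (Xs n m a k i))"
  define P where "P = (\<lambda>k. \<forall>i<m. Xs n m a k i = k * n div m \<or> Xs n m a k i = k * n div m + 1)"
  have each: "V k \<le> f k \<and> (f k = V k \<longleftrightarrow> P k)" if k: "k \<in> {1..<m}" for k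
  proof -
    have k': "1 \<le> k" "k < m" using k by auto
    have rng: "\<forall>i<m. 1 \<le> Xs n m a k i \<and> Xs n m a k i \<le> n - 1" using Xs_range[OF e an k'] by blast
    have S: "(\<Sum>i\<in>{0..<m}. Xs n m a k i) = k * n" using Xs_sum[OF e an k'] .
    have "0 < m" using m2 by simp
    from convex_sum[where lo=1 and hi="n-1" and h="hh n g", OF conv this rng S]
    show ?thesis unfolding V_def f_def P_def by blast
  qed
  have E: "2 * energy n g C = sum f {1..<m}" unfolding f_def by (rule energy_enum[OF e an])
  have le: "sum V {1..<m} \<le> sum f {1..<m}" by (rule sum_mono) (use each in blast)
  have "sum f {1..<m} = sum V {1..<m} \<longleftrightarrow> (\<forall>k\<in>{1..<m}. f k - V k = 0)"
  proof -
    have "sum f {1..<m} = sum V {1..<m} \<longleftrightarrow> (\<Sum>k\<in>{1..<m}. f k - V k) = 0"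
      by (simp add: sum_subtractf)
    also have "\<dots> \<longleftrightarrow> (\<forall>k\<in>{1..<m}. f k - V k = 0)"
      by (rule sum_nonneg_eq_0_iff) (use each in auto)
    finally show ?thesis .
  qed
  also have "\<dots> \<longleftrightarrow> (\<forall>k\<in>{1..<m}. P k)" using each by auto
  finally have iff: "sum f {1..<m} = sum V {1..<m} \<longleftrightarrow> (\<forall>k\<in>{1..<m}. P k)" .
  show ?thesis using le iff E unfolding V_def P_def by simp
qed

lemma energy_small:
  assumes "finite C" "card C \<le> 1"
  shows "energy n g C = 0"
proof -
  have all: "\<forall>a\<in>C. \<forall>b\<in>C. a = b" using assms card_le_Suc0_iff_eq[OF assms(1)] by auto
  have emp: "{(u, v). u \<in> C \<and> v \<in> C \<and> u < v} = {}"
    using all by auto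
  show ?thesis unfolding energy_def emp by (simp only: sum.empty)
qed

theorem mainTheorem5:
  fixes n :: nat and g :: "nat \<Rightarrow> real" and A :: "nat set"
  assumes "n \<ge> 3"
    and "\<forall>k. 1 \<le> k \<and> k + 1 \<le> n div 2 \<longrightarrow> g (k + 1) < g k"
    and "\<forall>k. 2 \<le> k \<and> k + 1 \<le> n div 2 \<longrightarrow> 2 * g k < g (k - 1) + g (k + 1)"
    and "A \<subseteq> {0..<n}"
  shows "is_minimizer n g A \<longleftrightarrow> maximally_even n A"
proof -
  have conv: "\<And>y. 1 < y \<Longrightarrow> y < n - 1 \<Longrightarrow> 2 * hh n g y < hh n g (y - 1) + hh n g (y + 1)"
    using hh_conv[OF assms(1,2,3)] by blast
  have finA: "finite A" using finite_subset[OF assms(4)] by simp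
  define m where "m = card A"
  show ?thesis
  proof (cases "m \<le> 1")
    case True
    have "is_minimizer n g A"
      unfolding is_minimizer_def
    proof (intro conjI allI impI)
      show "A \<subseteq> {0..<n}" by (rule assms(4))
      fix B assume B: "B \<subseteq> {0..<n} \<and> card B = card A"
      have "finite B" using finite_subset[of B "{0..<n}"] B by simp
      have cB: "card B \<le> 1" using B True m_def by simp
      have cA: "card A \<le> 1" using True m_def by simp
      have "energy n g A = 0" by (rule energy_small[OF finA cA])
      moreover have "energy n g B = 0" by (rule energy_small[OF \<open>finite B\<close> cB])
      ultimately show "energy n g A \<le> energy n g B" by simp
    qed
    moreover have "maximally_even n A" unfolding maximally_even_def using True m_def by auto
    ultimately show ?thesis by simp
  next
    case False
    then have m2: "2 \<le> m" by simp
    have mn: "m \<le> n" unfolding m_def using card_mono[OF _ assms(4)] by simp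
    define LB where "LB = (\<Sum>k\<in>{1..<m}. real (m - k * n mod m) * hh n g (k * n div m) + real (k * n mod m) * hh n g (k * n div m + 1))"
    have gen: "LB \<le> 2 * energy n g C" if C: "C \<subseteq> {0..<n}" "card C = m" for C
    proof -
      have fC: "finite C" by (rule finite_subset[OF C(1)]) simp
      have e0: "enum C (card C) (\<lambda>i. sorted_list_of_set C ! i)" by (rule enum_exists[OF fC])
      have e: "enum C m (\<lambda>i. sorted_list_of_set C ! i)" using e0 unfolding C(2) .
      have an: "\<forall>i<m. sorted_list_of_set C ! i < n"
      proof (intro allI impI)
        fix i assume i: "i < m"
        have Ce: "C = (\<lambda>i. sorted_list_of_set C ! i) ` {0..<m}" using e unfolding enum_def by (rule conjunct2)
        have "sorted_list_of_set C ! i \<in> (\<lambda>i. sorted_list_of_set C ! i) ` {0..<m}" by (rule imageI) (simp add: i)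
        then have "sorted_list_of_set C ! i \<in> C" using Ce by simp
        then show "sorted_list_of_set C ! i < n" using C by auto
      qed
      show ?thesis unfolding LB_def by (rule conjunct1[OF key[OF conv e an m2]])
    qed
    define a where "a = (\<lambda>i. sorted_list_of_set A ! i)"
    have eA: "enum A m a" using enum_exists[OF finA] by (simp add: a_def m_def)
    have aA: "\<forall>i<m. a i < n"
    proof (intro allI impI)
      fix i assume i: "i < m"
      have Ae: "A = a ` {0..<m}" using eA unfolding enum_def by (rule conjunct2)
      have "a i \<in> a ` {0..<m}" by (rule imageI) (simp add: i)
      then have "a i \<in> A" using Ae by simp
      then show "a i < n" using assms(4) by auto
    qed
    have k1: "2 * energy n g A = LB \<longleftrightarrow>
      (\<forall>k\<in>{1..<m}. \<forall>i<m. Xs n m a k i = k * n div m \<or> Xs n m a k i = k * n div m + 1)"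
      using key[OF conv eA aA m2] unfolding LB_def by blast
    have ME: "maximally_even n A \<longleftrightarrow> 2 * energy n g A = LB"
      unfolding k1 by (rule ME_iff[OF eA aA m2])
    obtain eb: "enum (bb n m ` {0..<m}) m (bb n m)" and bn: "\<forall>i<m. bb n m i < n"
      using bb_enum[of m n] m2 mn by auto
    have allb: "\<forall>k\<in>{1..<m}. \<forall>i<m. Xs n m (bb n m) k i = k * n div m \<or> Xs n m (bb n m) k i = k * n div m + 1"
    proof (intro ballI allI impI)
      fix k i assume "k \<in> {1..<m}" "i < m"
      then show "Xs n m (bb n m) k i = k * n div m \<or> Xs n m (bb n m) k i = k * n div m + 1"
        using bb_Xs[of m n k i] m2 mn by simp
    qed
    have B0: "2 * energy n g (bb n m ` {0..<m}) = LB"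
      using key[OF conv eb bn m2] allb unfolding LB_def by blast
    have B0sub: "bb n m ` {0..<m} \<subseteq> {0..<n}" using bn by auto
    have B0card: "card (bb n m ` {0..<m}) = m" using enum_card[OF eb] .
    show ?thesis
    proof
      assume mini: "is_minimizer n g A"
      have cc: "card (bb n m ` {0..<m}) = card A" using B0card m_def by simp
      from mini have "\<forall>B. B \<subseteq> {0..<n} \<and> card B = card A \<longrightarrow> energy n g A \<le> energy n g B"
        unfolding is_minimizer_def by blast
      then have "energy n g A \<le> energy n g (bb n m ` {0..<m})"
        using B0sub cc by blast
      moreover have "LB \<le> 2 * energy n g A" using gen[OF assms(4)] m_def by blast
      ultimately have "2 * energy n g A = LB" using B0 by simp
      then show "maximally_even n A" using ME by simp
    next
      assume "maximally_even n A"
      then have EA: "2 * energy n g A = LB" using ME by simp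
      show "is_minimizer n g A" unfolding is_minimizer_def
      proof (intro conjI allI impI)
        show "A \<subseteq> {0..<n}" by (rule assms(4))
        fix B assume B: "B \<subseteq> {0..<n} \<and> card B = card A"
        then have "LB \<le> 2 * energy n g B" using gen[of B] m_def by simp
        then show "energy n g A \<le> energy n g B" using EA by simp
      qed
    qed
  qed
qed

end
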